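(* Let $\bm c_0\in\mathbb R^{|E|}$ be a metric cost vector on the complete graph $K_n=(V,E)$ with $TOUR(\bm c_0)=1$, and let $\bar{\bm x}^{(0)}$ be an optimal solution of the subtour elimination problem $SEP(\bm c_0)$. Let \[ \bm c_1 \in \arg\min \Big\{ \sum_{\{i,j\}\in E} \bar x^{(0)}_{ij} c_{ij} \;:\; \sum_{\{i,j\}\in E} \bar z_{ij} c_{ij} \ge 1 \ \forall \bar{\bm z}\in\mathcal T_n,\ c_{ij}\le c_{ik}+c_{jk}\ \forall i,j,k\in V,\ c_{ij}\ge 0\ \forall \{i,j\}\in E \Big\}. \] Then \[ \frac{TOUR(\bm c_1)}{SUBT(\bm c_1)} \ge \frac{TOUR(\bm c_0)}{SUBT(\bm c_0)}. \]
   Context: $K_n=(V,E)$ is the complete undirected graph on $V=\{1,\dots,n\}$, with symmetric edge costs. A cost vector $\bm c$ is metric if $c_{ij}\ge 0$, $c_{ij}\le c_{ik}+c_{jk}$ for all $i,j,k$, (and $c_{ij}=0$ iff $i=j$). For $S\subset V$, $\delta(S)$ is the set of edges with exactly one endpoint in $S$, and $\mathcal S=\{S\subset V: 3\le|S|\le n-3\}$. The subtour elimination polytope is $P_{SEP}=\{\bm x\in\mathbb R^{|E|}_+ : \sum_{e\in\delta(\{v\})}x_e=2\ \forall v,\ \sum_{e\in\delta(S)}x_e\ge2\ \forall S\in\mathcal S,\ 0\le x_e\le1\ \forall e\}$; $SEP(\bm c)$ is the LP $\min\{\bm c^T\bm x:\bm x\in P_{SEP}\}$ and $SUBT(\bm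 c)$ its optimal value. $\mathcal T_n$ is the set of incidence vectors of tours (Hamiltonian cycles) of $K_n$, and $TOUR(\bm c)=\min_{\bm z\in\mathcal T_n}\bm c^T\bm z$ is the optimal TSP value. *)

theory Defs
  imports Complex_Main
begin

text \<open>Complete graph K_n on V = {1..n}; edges are 2-element vertex sets.
 Edge vectors (costs, LP solutions) are functions on edges (values off E are irrelevant).\<close>

definition verts :: "nat \<Rightarrow> nat set" where
  "verts n = {1..n}"

definition edges :: "nat \<Rightarrow> nat set set" where
  "edges n = {{i, j} | i j. i \<in> verts n \<and> j \<in> verts n \<and> i \<noteq> j}"

definition cut :: "nat \<Rightarrow> nat set \<Rightarrow> nat set set" where
  "cut n S = {e \<in> edges n. card (e \<inter> S) = 1}"

definition lin :: "nat \<Rightarrow> (nat set \<Rightarrow> real) \<Rightarrow> (nat set \<Rightarrow> real) \<Rightarrow> real" where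
  "lin n c x = (\<Sum>e\<in>edges n. c e * x e)"

text \<open>c_{ij} >= 0 and c_{ij} <= c_{ik} + c_{jk} for all i,j,k (degenerate index cases are trivial).\<close>
definition metric :: "nat \<Rightarrow> (nat set \<Rightarrow> real) \<Rightarrow> bool" where
  "metric n c \<longleftrightarrow> (\<forall>e\<in>edges n. 0 \<le> c e) \<and>
     (\<forall>i\<in>verts n. \<forall>j\<in>verts n. \<forall>k\<in>verts n. i \<noteq> j \<and> i \<noteq> k \<and> j \<noteq> k \<longrightarrow>
        c {i, j} \<le> c {i, k} + c {j, k})"

definition sep_feasible :: "nat \<Rightarrow> (nat set \<Rightarrow> real) \<Rightarrow> bool" where
  "sep_feasible n x \<longleftrightarrow>
     (\<forall>e\<in>edges n. 0 \<le> x e \<and> x e \<le> 1) \<and>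
     (\<forall>v\<in>verts n. (\<Sum>e\<in>cut n {v}. x e) = 2) \<and>
     (\<forall>S. S \<subseteq> verts n \<and> 3 \<le> card S \<and> card S + 3 \<le> n \<longrightarrow> (\<Sum>e\<in>cut n S. x e) \<ge> 2)"

definition SUBT :: "nat \<Rightarrow> (nat set \<Rightarrow> real) \<Rightarrow> real" where
  "SUBT n c = Inf (lin n c ` {x. sep_feasible n x})"

definition sep_optimal :: "nat \<Rightarrow> (nat set \<Rightarrow> real) \<Rightarrow> (nat set \<Rightarrow> real) \<Rightarrow> bool" where
  "sep_optimal n c x \<longleftrightarrow> sep_feasible n x \<and> (\<forall>y. sep_feasible n y \<longrightarrow> lin n c x \<le> lin n c y)"

definition tour_edges :: "nat \<Rightarrow> (nat \<Rightarrow> nat) \<Rightarrow> nat set set" where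
  "tour_edges n p = {{p i, p (Suc i mod n)} | i. i < n}"

definition tours :: "nat \<Rightarrow> (nat set \<Rightarrow> real) set" where
  "tours n = {(\<lambda>e. if e \<in> tour_edges n p then 1 else 0) | p. bij_betw p {0..<n} (verts n)}"

definition TOUR :: "nat \<Rightarrow> (nat set \<Rightarrow> real) \<Rightarrow> real" where
  "TOUR n c = Inf (lin n c ` tours n)"

definition c1_feasible :: "nat \<Rightarrow> (nat set \<Rightarrow> real) \<Rightarrow> bool" where
  "c1_feasible n c \<longleftrightarrow> (\<forall>z\<in>tours n. lin n c z \<ge> 1) \<and> metric n c"

definition c1_argmin :: "nat \<Rightarrow> (nat set \<Rightarrow> real) \<Rightarrow> (nat set \<Rightarrow> real) \<Rightarrow> bool" where
  "c1_argmin n x c \<longleftrightarrow> c1_feasible n c \<and> (\<forall>c'. c1_feasible n c' \<longrightarrow> lin n x c \<le> lin n x c')"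

end

theory Submission
  imports Defs
begin


lemma finite_edges: "finite (edges n)"
proof -
  have "edges n \<subseteq> Pow (verts n)" by (auto simp: edges_def)
  then show ?thesis by (rule finite_subset) (simp add: verts_def)
qed

lemma edge_in: "{a,b} \<in> edges n \<longleftrightarrow> a \<in> verts n \<and> b \<in> verts n \<and> a \<noteq> b"
  unfolding edges_def by (auto simp: doubleton_eq_iff)

lemma cut_mem:
  assumes "e \<in> cut n S"
  shows "\<exists>a b. e = {a,b} \<and> a \<in> verts n \<and> b \<in> verts n \<and> a \<noteq> b \<and> a \<in> S \<and> b \<notin> S"
proof -
  from assms obtain i j where e: "e = {i,j}" "i \<in> verts n" "j \<in> verts n" "i \<noteq> j"
    and c: "card (e \<inter> S) = 1" by (auto simp: cut_def edges_def)
  show ?thesis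
  proof (cases "i \<in> S")
    case True
    then have "j \<notin> S" using c e by (auto simp: Int_insert_left)
    then show ?thesis using True e by blast
  next
    case False
    then have "j \<in> S" using c e by (auto simp: Int_insert_left split: if_splits)
    then show ?thesis using False e by (metis insert_commute)
  qed
qed

lemma cut_single: "cut n {a} = {e \<in> edges n. a \<in> e}"
  unfolding cut_def by (auto simp: Int_insert_right split: if_splits)

lemma cut_compl:
  assumes "S \<subseteq> verts n"
  shows "cut n S = cut n (verts n - S)"
proof -
  have "card (e \<inter> S) = 1 \<longleftrightarrow> card (e \<inter> (verts n - S)) = 1" if "e \<in> edges n" for e
  proof -
    from that obtain i j where e: "e = {i,j}" "i \<in> verts n" "j \<in> verts n" "i \<noteq> j"
      by (auto simp: edges_def)
    then show ?thesis by (cases "i \<in> S"; cases "j \<in> S") (auto simp: Int_insert_left)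
  qed
  then show ?thesis unfolding cut_def by blast
qed

lemma cut_two:
  assumes "sep_feasible n x" "a \<in> verts n" "b \<in> verts n" "a \<noteq> b"
  shows "(\<Sum>e\<in>cut n {a,b}. x e) \<ge> 2"
proof -
  have U: "cut n {a} \<union> cut n {b} = cut n {a,b} \<union> {{a,b}}"
  proof (rule set_eqI)
    fix e
    have "e \<in> cut n {a,b} \<longleftrightarrow> e \<in> edges n \<and> (a \<in> e \<or> b \<in> e) \<and> \<not> (a \<in> e \<and> b \<in> e)"
    proof (cases "a \<in> e"; cases "b \<in> e")
      assume "a \<in> e" "b \<in> e"
      then have "e \<inter> {a,b} = {a,b}" by auto
      then show ?thesis using assms(4) \<open>a \<in> e\<close> \<open>b \<in> e\<close> by (simp add: cut_def)
    next
      assume "a \<in> e" "b \<notin> e"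
      then have "e \<inter> {a,b} = {a}" by auto
      then show ?thesis using \<open>a \<in> e\<close> \<open>b \<notin> e\<close> by (simp add: cut_def)
    next
      assume "a \<notin> e" "b \<in> e"
      then have "e \<inter> {a,b} = {b}" by auto
      then show ?thesis using \<open>a \<notin> e\<close> \<open>b \<in> e\<close> by (simp add: cut_def)
    next
      assume "a \<notin> e" "b \<notin> e"
      then have "e \<inter> {a,b} = {}" by auto
      then show ?thesis using \<open>a \<notin> e\<close> \<open>b \<notin> e\<close> by (simp add: cut_def)
    qed
    moreover have "e \<in> edges n \<Longrightarrow> a \<in> e \<Longrightarrow> b \<in> e \<Longrightarrow> e = {a,b}"
      using assms(4) by (auto simp: edges_def)
    moreover have "{a,b} \<in> edges n" using assms(2-4) by (simp add: edge_in)
    ultimately show "e \<in> cut n {a} \<union> cut n {b} \<longleftrightarrow> e \<in> cut n {a,b} \<union> {{a,b}}"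
      unfolding cut_single by blast
  qed
  have I: "cut n {a} \<inter> cut n {b} = {{a,b}}"
    using assms(2-4) unfolding cut_single by (auto simp: edges_def doubleton_eq_iff)
  have D: "cut n {a,b} \<inter> {{a,b}} = {}"
    using assms(4) by (auto simp: cut_def)
  have fin: "finite (cut n S)" for S using finite_edges[of n] by (simp add: cut_def)
  have "(\<Sum>e\<in>cut n {a}. x e) + (\<Sum>e\<in>cut n {b}. x e)
      = (\<Sum>e\<in>cut n {a} \<union> cut n {b}. x e) + (\<Sum>e\<in>cut n {a} \<inter> cut n {b}. x e)"
    by (simp add: sum.union_inter fin)
  also have "\<dots> = (\<Sum>e\<in>cut n {a,b}. x e) + 2 * x {a,b}"
    unfolding U I using D by (simp add: sum.union_disjoint fin)
  finally have "(\<Sum>e\<in>cut n {a}. x e) + (\<Sum>e\<in>cut n {b}. x e) = (\<Sum>e\<in>cut n {a,b}. x e) + 2 * x {a,b}" .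
  moreover have "(\<Sum>e\<in>cut n {a}. x e) = 2" "(\<Sum>e\<in>cut n {b}. x e) = 2"
    using assms by (auto simp: sep_feasible_def)
  moreover have "x {a,b} \<le> 1" using assms by (auto simp: sep_feasible_def edge_in)
  ultimately show ?thesis by linarith
qed

lemma cut_small:
  assumes "sep_feasible n x" "T \<subseteq> verts n" "card T = 1 \<or> card T = 2"
  shows "(\<Sum>e\<in>cut n T. x e) \<ge> 2"
  using assms(3)
proof
  assume "card T = 1"
  then obtain a where "T = {a}" by (auto simp: card_Suc_eq)
  moreover have "a \<in> verts n" using assms(2) \<open>T = {a}\<close> by auto
  ultimately show ?thesis using assms(1) unfolding sep_feasible_def by simp
next
  assume "card T = 2"
  then obtain a b where "T = {a,b}" "a \<noteq> b" by (auto simp: card_Suc_eq numeral_2_eq_2)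
  then show ?thesis using assms cut_two by auto
qed

lemma cut_ge2:
  assumes "sep_feasible n x" "S \<subseteq> verts n" "S \<noteq> {}" "S \<noteq> verts n"
  shows "(\<Sum>e\<in>cut n S. x e) \<ge> 2"
proof -
  have cV: "card (verts n) = n" by (simp add: verts_def)
  have fV: "finite (verts n)" by (simp add: verts_def)
  have fS: "finite S" using assms(2) fV finite_subset by blast
  have k1: "card S \<ge> 1" using fS assms(3) by (simp add: Suc_le_eq card_gt_0_iff)
  have psub: "S \<subset> verts n" using assms by blast
  have kc: "card (verts n - S) = n - card S" using assms(2) fS cV by (simp add: card_Diff_subset)
  have kn: "card S < n" using psubset_card_mono[OF fV psub] cV by simp
  show ?thesis
  proof (cases "card S \<le> 2")
    case True then show ?thesis using cut_small[OF assms(1,2)] k1 by linarith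
  next
    case F: False
    show ?thesis
    proof (cases "n - card S \<le> 2")
      case True
      have "(\<Sum>e\<in>cut n (verts n - S). x e) \<ge> 2"
      proof (rule cut_small[OF assms(1)])
        show "verts n - S \<subseteq> verts n" by blast
        show "card (verts n - S) = 1 \<or> card (verts n - S) = 2" unfolding kc using True kn by linarith
      qed
      then show ?thesis using cut_compl[OF assms(2)] by simp
    next
      case False
      have "3 \<le> card S" "card S + 3 \<le> n" using F False by linarith+
      moreover have "\<forall>S. S \<subseteq> verts n \<and> 3 \<le> card S \<and> card S + 3 \<le> n \<longrightarrow> (\<Sum>e\<in>cut n S. x e) \<ge> 2"
        using assms(1) unfolding sep_feasible_def by (elim conjE)
      ultimately show ?thesis using assms(2) by blast
    qed
  qed
qed




lemma lin_lower:
  assumes x: "sep_feasible n x" and m: "metric n c"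
    and uw: "u \<in> verts n" "w \<in> verts n" "u \<noteq> w" and dpos: "c {u,w} > 0"
  shows "lin n c x \<ge> 2 * (c {u,w} / real n)"
proof -
  define V where "V = verts n"
  define d where "d = c {u,w}"
  define h where "h = d / real n"
  have cV: "card V = n" by (simp add: V_def verts_def)
  have fV: "finite V" by (simp add: V_def verts_def)
  have n1: "n \<ge> 1" using uw(1) by (simp add: verts_def)
  have hpos: "h > 0" using dpos n1 by (simp add: h_def d_def)
  have dh: "d = real n * h" using n1 by (simp add: h_def)
  define r where "r k = (if k = u then 0 else c {u,k})" for k
  have cnn: "\<And>e. e \<in> edges n \<Longrightarrow> 0 \<le> c e" using m by (simp add: metric_def)
  have tri: "r b - r a \<le> c {a,b}" if "a \<in> V" "b \<in> V" "a \<noteq> b" for a b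
  proof (cases "a = u")
    case True
    then show ?thesis using that by (simp add: r_def)
  next
    case aF: False
    show ?thesis
    proof (cases "b = u")
      case True
      have e1: "{u,a} \<in> edges n" using that aF uw(1) by (simp add: edge_in V_def)
      have "r b - r a = - c {u,a}" using True aF by (simp add: r_def)
      moreover have "{a,b} \<in> edges n" using that by (simp add: edge_in V_def)
      ultimately show ?thesis using cnn[OF e1] cnn[of "{a,b}"] by linarith
    next
      case False
      have M: "\<forall>i\<in>verts n. \<forall>j\<in>verts n. \<forall>k\<in>verts n. i \<noteq> j \<and> i \<noteq> k \<and> j \<noteq> k \<longrightarrow>
        c {i, j} \<le> c {i, k} + c {j, k}" using m unfolding metric_def by (elim conjE)
      have "c {u,b} \<le> c {u,a} + c {b,a}"
        using M uw(1) that aF False unfolding V_def by metis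
      moreover have "{b,a} = {a,b}" by (rule insert_commute)
      ultimately show ?thesis using aF False by (simp add: r_def)
    qed
  qed
  have rw: "r w = d" using uw by (simp add: r_def d_def)
  have gap: "\<exists>j<n. \<not> (\<exists>k\<in>V. real j * h < r k \<and> r k \<le> (real j + 1) * h)"
  proof (rule ccontr)
    assume "\<not> ?thesis"
    then have "\<forall>j\<in>{0..<n}. \<exists>k. k \<in> V \<and> real j * h < r k \<and> r k \<le> (real j + 1) * h" by auto
    from bchoice[OF this] obtain g where g0: "\<forall>j\<in>{0..<n}. g j \<in> V \<and> real j * h < r (g j) \<and> r (g j) \<le> (real j + 1) * h"
      by blast
    have g: "\<And>j. j \<in> {0..<n} \<Longrightarrow> g j \<in> V \<and> real j * h < r (g j) \<and> r (g j) \<le> (real j + 1) * h"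
      using g0 by blast
    have inj: "inj_on g {0..<n}"
    proof (rule inj_onI)
      fix i j assume ij: "i \<in> {0..<n}" "j \<in> {0..<n}" "g i = g j"
      have "\<not> i < j" if "i \<in> {0..<n}" "j \<in> {0..<n}" "g i = g j" for i j
      proof
        assume "i < j"
        then have "real i + 1 \<le> real j" by simp
        then have "(real i + 1) * h \<le> real j * h" using hpos by (simp add: mult_right_mono)
        moreover have "r (g i) = r (g j)" using that(3) by simp
        ultimately show False using g[OF that(1)] g[OF that(2)] by linarith
      qed
      then have "\<not> i < j" "\<not> j < i" using ij by auto
      then show "i = j" by simp
    qed
    have sub: "g ` {0..<n} \<subseteq> V - {u}"
    proof
      fix y assume "y \<in> g ` {0..<n}"
      then obtain j where j: "j \<in> {0..<n}" "y = g j" by auto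
      have "0 \<le> real j * h" using hpos by simp
      then have "r y \<noteq> 0" using g[OF j(1)] unfolding j(2) by linarith
      then show "y \<in> V - {u}" using g[OF j(1)] j(2) by (auto simp: r_def)
    qed
    have "card (g ` {0..<n}) \<le> card (V - {u})" using sub fV by (simp add: card_mono)
    moreover have "card (g ` {0..<n}) = n" using inj by (simp add: card_image)
    moreover have "card (V - {u}) = n - 1" using cV uw(1) fV by (simp add: V_def)
    ultimately show False using n1 by linarith
  qed
  then obtain j where j: "j < n" and gj: "\<And>k. k \<in> V \<Longrightarrow> \<not> (real j * h < r k \<and> r k \<le> (real j + 1) * h)"
    by blast
  define S where "S = {k \<in> V. r k \<le> real j * h}"
  have SV: "S \<subseteq> verts n" by (auto simp: S_def V_def)
  have uS: "u \<in> S" using uw hpos by (simp add: S_def V_def r_def)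
  have "real j * h < d"
  proof -
    have "real j + 1 \<le> real n" using j by simp
    then have "(real j + 1) * h \<le> real n * h" using hpos by (simp add: mult_right_mono)
    then have "real j * h + h \<le> real n * h" by (simp add: distrib_right)
    then show ?thesis using dh hpos by linarith
  qed
  then have wS: "w \<notin> S" using rw by (simp add: S_def)
  have Sne: "S \<noteq> {}" using uS by blast
  have SnV: "S \<noteq> verts n" using wS uw by blast
  have cross: "c e \<ge> h" if eS: "e \<in> cut n S" for e
  proof -
    obtain a b where ab: "e = {a,b}" "a \<in> verts n" "b \<in> verts n" "a \<noteq> b" "a \<in> S" "b \<notin> S"
      using cut_mem[OF eS] by blast
    have ra: "r a \<le> real j * h" using ab by (simp add: S_def)
    have rb: "r b > real j * h" using ab by (simp add: S_def V_def)
    have "r b > (real j + 1) * h" using gj[of b] ab rb by (simp add: V_def) 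
    moreover have "r b - r a \<le> c {a,b}" using tri ab by (simp add: V_def)
    ultimately show ?thesis using ra ab by (simp add: algebra_simps)
  qed
  have fin: "finite (cut n S)" using finite_edges[of n] by (simp add: cut_def)
  have xnn: "\<And>e. e \<in> edges n \<Longrightarrow> 0 \<le> x e" using x by (simp add: sep_feasible_def)
  have "h * 2 \<le> h * (\<Sum>e\<in>cut n S. x e)"
    using cut_ge2[OF x SV Sne SnV] hpos by simp
  also have "\<dots> = (\<Sum>e\<in>cut n S. h * x e)" by (simp add: sum_distrib_left)
  also have "\<dots> \<le> (\<Sum>e\<in>cut n S. c e * x e)"
  proof (rule sum_mono)
    fix e assume "e \<in> cut n S"
    then show "h * x e \<le> c e * x e" using cross xnn by (simp add: cut_def mult_right_mono)
  qed
  also have "\<dots> \<le> (\<Sum>e\<in>edges n. c e * x e)"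
    by (rule sum_mono2[OF finite_edges]) (auto simp: cut_def cnn xnn)
  finally show ?thesis by (simp add: lin_def h_def d_def mult.commute)
qed



lemma tours_ne: "tours n \<noteq> {}"
proof -
  have "bij_betw Suc {0..<n} (verts n)"
    unfolding bij_betw_def verts_def by (auto simp: image_Suc_atLeastLessThan atLeastLessThanSuc_atLeastAtMost)
  then show ?thesis unfolding tours_def by blast
qed

lemma tour_01: "z \<in> tours n \<Longrightarrow> z e = 0 \<or> z e = 1"
  unfolding tours_def by auto

lemma lin_tour_nn:
  assumes "\<And>e. e \<in> edges n \<Longrightarrow> 0 \<le> c e" "z \<in> tours n"
  shows "0 \<le> lin n c z"
  unfolding lin_def using assms tour_01[OF assms(2)]
  by (intro sum_nonneg) (metis mult_nonneg_nonneg order_refl zero_le_one)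

lemma lin_feas_nn:
  assumes "\<And>e. e \<in> edges n \<Longrightarrow> 0 \<le> c e" "sep_feasible n x"
  shows "0 \<le> lin n c x"
  unfolding lin_def using assms
  by (intro sum_nonneg) (simp add: sep_feasible_def)

theorem lemma3:
  fixes n :: nat and c0 c1 x0 :: "nat set \<Rightarrow> real"
  assumes "n \<ge> 3"
    and "metric n c0"
    and "TOUR n c0 = 1"
    and "sep_optimal n c0 x0"
    and "c1_argmin n x0 c1"
  shows "TOUR n c1 / SUBT n c1 \<ge> TOUR n c0 / SUBT n c0"
proof -
  have c0nn: "\<And>e. e \<in> edges n \<Longrightarrow> 0 \<le> c0 e" using assms(2) by (simp add: metric_def)
  have m1: "metric n c1" using assms(5) by (simp add: c1_argmin_def c1_feasible_def)
  have c1nn: "\<And>e. e \<in> edges n \<Longrightarrow> 0 \<le> c1 e" using m1 by (simp add: metric_def)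
  have t1: "\<And>z. z \<in> tours n \<Longrightarrow> 1 \<le> lin n c1 z"
    using assms(5) by (simp add: c1_argmin_def c1_feasible_def)
  have x0: "sep_feasible n x0" using assms(4) by (simp add: sep_optimal_def)
  have T1: "TOUR n c1 \<ge> 1"
    unfolding TOUR_def using tours_ne t1 by (intro cInf_greatest) auto
  have t0: "1 \<le> lin n c0 z" if "z \<in> tours n" for z
  proof -
    have "bdd_below (lin n c0 ` tours n)"
      using lin_tour_nn[OF c0nn] by (intro bdd_belowI[of _ 0]) auto
    then have "TOUR n c0 \<le> lin n c0 z" unfolding TOUR_def using that by (intro cInf_lower) auto
    then show ?thesis using assms(3) by simp
  qed
  have f0: "c1_feasible n c0" using t0 assms(2) by (simp add: c1_feasible_def)
  have le1: "lin n x0 c1 \<le> lin n x0 c0" using assms(5) f0 by (simp add: c1_argmin_def)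
  have S0: "SUBT n c0 = lin n c0 x0"
  proof (rule antisym)
    show "SUBT n c0 \<le> lin n c0 x0" unfolding SUBT_def using x0 lin_feas_nn[OF c0nn]
      by (intro cInf_lower) (auto intro: bdd_belowI[of _ 0])
    show "lin n c0 x0 \<le> SUBT n c0" unfolding SUBT_def using x0 assms(4)
      by (intro cInf_greatest) (auto simp: sep_optimal_def)
  qed
  have S1le: "SUBT n c1 \<le> lin n c1 x0" unfolding SUBT_def using x0 lin_feas_nn[OF c1nn]
      by (intro cInf_lower) (auto intro: bdd_belowI[of _ 0])
  have comm: "lin n a b = lin n b a" for a b unfolding lin_def by (simp add: mult.commute)
  have S1S0: "SUBT n c1 \<le> SUBT n c0" using S1le le1 S0 comm by simp
  obtain z where z: "z \<in> tours n" using tours_ne by blast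
  have "\<exists>e\<in>edges n. c1 e * z e \<noteq> 0"
  proof (rule ccontr)
    assume "\<not> ?thesis"
    then have "lin n c1 z = 0" unfolding lin_def by (intro sum.neutral) auto
    then show False using t1[OF z] by simp
  qed
  then obtain e where e: "e \<in> edges n" "c1 e \<noteq> 0" by auto
  then have epos: "c1 e > 0" using c1nn[OF e(1)] by simp
  obtain u w where uw: "e = {u,w}" "u \<in> verts n" "w \<in> verts n" "u \<noteq> w"
    using e(1) by (auto simp: edges_def)
  have npos: "real n > 0" using assms(1) by simp
  have hpos: "2 * (c1 {u,w} / real n) > 0" using epos uw(1) npos by simp
  have S1pos: "SUBT n c1 \<ge> 2 * (c1 {u,w} / real n)"
    unfolding SUBT_def using x0 lin_lower[OF _ m1 uw(2-4)] epos uw(1)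
    by (intro cInf_greatest) auto
  have S1p: "SUBT n c1 > 0" using S1pos hpos by linarith
  have "TOUR n c0 / SUBT n c0 = 1 / SUBT n c0" using assms(3) by simp
  also have "\<dots> \<le> 1 / SUBT n c1" using S1p S1S0 by (simp add: frac_le)
  also have "\<dots> \<le> TOUR n c1 / SUBT n c1" using S1p T1 by (simp add: divide_right_mono)
  finally show ?thesis .
qed

end
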